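(* Let $G$ be a subgroup of $S_n$, $\chi$ a character of $G$, $\theta,\tau\in S_n$ and $a,b\in\mathbb{C}$. Then $$d_\chi^G(aP_\theta+bP_\tau)=(a+b)^F\sum_{\sigma\in X(\theta,\tau)\cap G}\overline{\chi(\sigma)}\,a^{\,n-t_\sigma-F}\,b^{\,t_\sigma},$$ where $t_\sigma=n-|\operatorname{Fix}(\theta^{-1}\sigma)|$ and $F=|\operatorname{Fix}(\theta^{-1}\tau)|$.
   Context: $S_n$ is the symmetric group on $[n]=\{1,\dots,n\}$. A character $\chi$ of $G$ is $\chi(g)=\operatorname{tr}\rho(g)$ for a representation $\rho:G\to GL(V)$ on a finite-dimensional complex vector space. The generalized matrix function is $d_\chi^G(A)=\sum_{\sigma\in G}\chi(\sigma)\prod_{i=1}^n A_{i\,\sigma(i)}$ for $A\in M_n(\mathbb{C})$. For $\theta\in S_n$, the permutation matrix $P_\theta$ has $(P_\theta)_{ij}=1$ if $\theta^{-1}(i)=j$ and $0$ otherwise. $\operatorname{Fix}(\pi)$ is the set of fixed points of $\pi$. $X(\theta,\tau)=\{\sigma\in S_n \mid \text{for each } i\in[n],\ \sigma(i)=\theta(i)\text{ or }\sigma(i)=\tau(i)\}$. *)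

theory Defs
  imports "HOL-Combinatorics.Permutations" "Jordan_Normal_Form.Matrix"
begin

definition is_perm_subgroup :: "nat \<Rightarrow> (nat \<Rightarrow> nat) set \<Rightarrow> bool" where
  "is_perm_subgroup n G \<longleftrightarrow>
     G \<subseteq> {\<sigma>. \<sigma> permutes {1..n}} \<and> id \<in> G \<and>
     (\<forall>g\<in>G. \<forall>h\<in>G. g \<circ> h \<in> G) \<and> (\<forall>g\<in>G. Hilbert_Choice.inv g \<in> G)"

definition mat_trace :: "complex mat \<Rightarrow> complex" where
  "mat_trace M = (\<Sum>i<dim_row M. M $$ (i, i))"

definition is_character :: "(nat \<Rightarrow> nat) set \<Rightarrow> ((nat \<Rightarrow> nat) \<Rightarrow> complex) \<Rightarrow> bool" where
  "is_character G \<chi> \<longleftrightarrow>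
     (\<exists>(d::nat) (\<rho>::(nat \<Rightarrow> nat) \<Rightarrow> complex mat).
        (\<forall>g\<in>G. \<rho> g \<in> carrier_mat d d) \<and>
        \<rho> id = 1\<^sub>m d \<and>
        (\<forall>g\<in>G. \<forall>h\<in>G. \<rho> (g \<circ> h) = \<rho> g * \<rho> h) \<and>
        (\<forall>g\<in>G. \<chi> g = mat_trace (\<rho> g)))"

text \<open>Generalized matrix function; matrices are indexed by {1..n}.\<close>
definition gen_matrix_fun :: "nat \<Rightarrow> (nat \<Rightarrow> nat) set \<Rightarrow> ((nat \<Rightarrow> nat) \<Rightarrow> complex)
    \<Rightarrow> (nat \<Rightarrow> nat \<Rightarrow> complex) \<Rightarrow> complex" where
  "gen_matrix_fun n G \<chi> A = (\<Sum>\<sigma>\<in>G. \<chi> \<sigma> * (\<Prod>i\<in>{1..n}. A i (\<sigma> i)))"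

definition perm_mat :: "(nat \<Rightarrow> nat) \<Rightarrow> nat \<Rightarrow> nat \<Rightarrow> complex" where
  "perm_mat \<theta> i j = (if Hilbert_Choice.inv \<theta> i = j then 1 else 0)"

definition Fix :: "nat \<Rightarrow> (nat \<Rightarrow> nat) \<Rightarrow> nat set" where
  "Fix n \<pi> = {i \<in> {1..n}. \<pi> i = i}"

definition Xset :: "nat \<Rightarrow> (nat \<Rightarrow> nat) \<Rightarrow> (nat \<Rightarrow> nat) \<Rightarrow> (nat \<Rightarrow> nat) set" where
  "Xset n \<theta> \<tau> = {\<sigma>. \<sigma> permutes {1..n} \<and> (\<forall>i\<in>{1..n}. \<sigma> i = \<theta> i \<or> \<sigma> i = \<tau> i)}"

end

theory Submission
  imports Defs "HOL-Combinatorics.Cycles" "Jordan_Normal_Form.Jordan_Normal_Form_Existence"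
begin


lemma trace_mult_expand:
  fixes A B :: "complex mat"
  assumes A: "A \<in> carrier_mat d d" and B: "B \<in> carrier_mat d d"
  shows "mat_trace (A * B) = (\<Sum>i<d. \<Sum>j<d. A $$ (i,j) * B $$ (j,i))"
proof -
  have "mat_trace (A * B) = (\<Sum>i<d. (A * B) $$ (i,i))" unfolding mat_trace_def using A by simp
  also have "\<dots> = (\<Sum>i<d. \<Sum>j<d. A $$ (i,j) * B $$ (j,i))"
  proof (rule sum.cong[OF refl])
    fix i assume "i \<in> {..<d}"
    then show "(A * B) $$ (i,i) = (\<Sum>j<d. A $$ (i,j) * B $$ (j,i))"
      using A B by (simp add: scalar_prod_def atLeast0LessThan)
  qed
  finally show ?thesis .
qed

lemma trace_mult_comm:
  fixes A B :: "complex mat"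
  assumes A: "A \<in> carrier_mat d d" and B: "B \<in> carrier_mat d d"
  shows "mat_trace (A * B) = mat_trace (B * A)"
proof -
  have "mat_trace (A * B) = (\<Sum>i<d. \<Sum>j<d. A $$ (i,j) * B $$ (j,i))"
    by (rule trace_mult_expand[OF A B])
  also have "\<dots> = (\<Sum>j<d. \<Sum>i<d. B $$ (j,i) * A $$ (i,j))"
    by (subst sum.swap) (simp add: mult.commute)
  also have "\<dots> = mat_trace (B * A)"
    by (rule trace_mult_expand[OF B A, symmetric])
  finally show ?thesis .
qed

lemma upper_tri_mult1:
  fixes A B :: "'a::comm_semiring_1 mat"
  assumes A: "A \<in> carrier_mat d d" and B: "B \<in> carrier_mat d d"
    and uA: "\<And>i j. i < d \<Longrightarrow> j < i \<Longrightarrow> A $$ (i,j) = 0"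
    and uB: "\<And>i j. i < d \<Longrightarrow> j < i \<Longrightarrow> B $$ (i,j) = 0"
    and i: "i < d" and ji: "j < i"
  shows "(A * B) $$ (i,j) = 0"
proof -
  have "(A * B) $$ (i,j) = (\<Sum>l<d. A $$ (i,l) * B $$ (l,j))"
    using A B i ji by (simp add: scalar_prod_def atLeast0LessThan)
  also have "\<dots> = 0"
  proof (rule sum.neutral, intro ballI)
    fix l assume l: "l \<in> {..<d}"
    show "A $$ (i,l) * B $$ (l,j) = 0"
    proof (cases "l < i")
      case True then show ?thesis using uA[OF i] by simp
    next
      case False then have "j < l" using ji by simp
      then show ?thesis using uB l by simp
    qed
  qed
  finally show ?thesis .
qed

lemma upper_tri_mult2:
  fixes A B :: "'a::comm_semiring_1 mat"
  assumes A: "A \<in> carrier_mat d d" and B: "B \<in> carrier_mat d d"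
    and uA: "\<And>i j. i < d \<Longrightarrow> j < i \<Longrightarrow> A $$ (i,j) = 0"
    and uB: "\<And>i j. i < d \<Longrightarrow> j < i \<Longrightarrow> B $$ (i,j) = 0"
    and i: "i < d"
  shows "(A * B) $$ (i,i) = A $$ (i,i) * B $$ (i,i)"
proof -
  have "(A * B) $$ (i,i) = (\<Sum>l<d. A $$ (i,l) * B $$ (l,i))"
    using A B i by (simp add: scalar_prod_def atLeast0LessThan)
  also have "\<dots> = A $$ (i,i) * B $$ (i,i)"
  proof -
    have z: "(\<Sum>l\<in>{..<d} - {i}. A $$ (i,l) * B $$ (l,i)) = 0"
    proof (rule sum.neutral, intro ballI)
      fix l assume l: "l \<in> {..<d} - {i}"
      show "A $$ (i,l) * B $$ (l,i) = 0"
      proof (cases "l < i")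
        case True then show ?thesis using uA[OF i] by simp
      next
        case False then have "i < l" using l by simp
        then show ?thesis using uB l by simp
      qed
    qed
    have "(\<Sum>l<d. A $$ (i,l) * B $$ (l,i)) = A $$ (i,i) * B $$ (i,i) + (\<Sum>l\<in>{..<d} - {i}. A $$ (i,l) * B $$ (l,i))"
      by (rule sum.remove) (use i in auto)
    then show ?thesis using z by simp
  qed
  finally show ?thesis .
qed

lemma upper_tri_pow:
  fixes J :: "'a::comm_semiring_1 mat"
  assumes J: "J \<in> carrier_mat d d"
    and uJ: "\<And>i j. i < d \<Longrightarrow> j < i \<Longrightarrow> J $$ (i,j) = 0"
  shows "(\<forall>i j. i < d \<longrightarrow> j < i \<longrightarrow> (J ^\<^sub>m k) $$ (i,j) = 0) \<and>
         (\<forall>i. i < d \<longrightarrow> (J ^\<^sub>m k) $$ (i,i) = J $$ (i,i) ^ k)"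
proof (induction k)
  case 0
  then show ?case using J by auto
next
  case (Suc k)
  have Jk: "J ^\<^sub>m k \<in> carrier_mat d d" using J by simp
  have uJk: "\<And>i j. i < d \<Longrightarrow> j < i \<Longrightarrow> (J ^\<^sub>m k) $$ (i,j) = 0" using Suc.IH by blast
  have e: "J ^\<^sub>m Suc k = J ^\<^sub>m k * J" by simp
  have p1: "\<forall>i j. i < d \<longrightarrow> j < i \<longrightarrow> (J ^\<^sub>m Suc k) $$ (i, j) = 0"
  proof (intro allI impI)
    fix i j assume ij: "i < d" "j < i"
    show "(J ^\<^sub>m Suc k) $$ (i, j) = 0" unfolding e by (rule upper_tri_mult1[OF Jk J uJk uJ ij])
  qed
  have p2: "\<forall>i. i < d \<longrightarrow> (J ^\<^sub>m Suc k) $$ (i, i) = J $$ (i, i) ^ Suc k"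
  proof (intro allI impI)
    fix i assume i: "i < d"
    have "(J ^\<^sub>m Suc k) $$ (i, i) = (J ^\<^sub>m k) $$ (i, i) * J $$ (i, i)" unfolding e by (rule upper_tri_mult2[OF Jk J uJk uJ i])
    also have "(J ^\<^sub>m k) $$ (i, i) = J $$ (i, i) ^ k" using Suc.IH i by blast
    finally show "(J ^\<^sub>m Suc k) $$ (i, i) = J $$ (i, i) ^ Suc k" by (simp add: mult.commute)
  qed
  show ?case using p1 p2 by blast
qed

lemma root_unity_cnj:
  fixes t :: complex
  assumes "t ^ k = 1" "k > 0"
  shows "t ^ (k - 1) = cnj t"
proof -
  obtain m where km: "k = Suc m" using assms(2) by (cases k) auto
  have "norm (t ^ k) = 1" using assms(1) by simp
  then have "norm t ^ k = 1 ^ k" by (simp add: norm_power)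
  then have nt: "norm t = 1" using power_eq_imp_eq_base[of "norm t" k 1] assms(2) by simp
  have h: "t * cnj t = 1" using complex_norm_square[of t] nt by simp
  have h2: "t ^ (k - 1) * t = 1" using assms(1) km by (simp add: power_Suc2 mult.commute)
  have "t ^ (k - 1) = t ^ (k - 1) * (t * cnj t)" using h by simp
  also have "\<dots> = (t ^ (k - 1) * t) * cnj t" by (simp only: mult.assoc)
  also have "\<dots> = cnj t" using h2 by simp
  finally show ?thesis .
qed

lemma trace_sim:
  fixes X P Q :: "complex mat"
  assumes X: "X \<in> carrier_mat d d" and P: "P \<in> carrier_mat d d" and Q: "Q \<in> carrier_mat d d"
    and QP: "Q * P = 1\<^sub>m d"
  shows "mat_trace (P * X * Q) = mat_trace X"
proof -
  have "mat_trace (P * X * Q) = mat_trace (Q * (P * X))"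
    using X P Q by (intro trace_mult_comm) auto
  also have "Q * (P * X) = (Q * P) * X" using X P Q by (simp add: assoc_mult_mat)
  also have "\<dots> = X" using QP X by simp
  finally show ?thesis .
qed

lemma trace_pow_pred:
  fixes M :: "complex mat"
  assumes M: "M \<in> carrier_mat d d" and k: "k > 0" and Mk: "M ^\<^sub>m k = 1\<^sub>m d"
  shows "mat_trace (M ^\<^sub>m (k - 1)) = cnj (mat_trace M)"
proof -
  obtain as where "char_poly M = (\<Prod>a\<leftarrow>as. [:- a, 1:])" using char_poly_factorized[OF M] by auto
  from jordan_nf_exists[OF M this] obtain n_as where jnf: "jordan_nf M n_as" ..
  define J where "J = jordan_matrix n_as"
  have "similar_mat M J" using jnf unfolding jordan_nf_def J_def by auto
  then obtain P Q where wit: "similar_mat_wit M J P Q" unfolding similar_mat_def by auto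
  have dM: "dim_row M = d" using M by simp
  from similar_mat_witD[OF dM[symmetric] wit] have J: "J \<in> carrier_mat d d"
    and P: "P \<in> carrier_mat d d" and Q: "Q \<in> carrier_mat d d"
    and PQ: "P * Q = 1\<^sub>m d" and QP: "Q * P = 1\<^sub>m d" and MJ: "M = P * J * Q" by auto
  have dJ: "dim_row J = d" using J by simp
  have uJ: "\<And>i j. i < d \<Longrightarrow> j < i \<Longrightarrow> J $$ (i,j) = 0"
    using jordan_matrix_upper_triangular[of _ n_as] dJ unfolding J_def by auto
  have pw: "M ^\<^sub>m r = P * J ^\<^sub>m r * Q" for r
    by (rule similar_mat_witD(3)[OF refl similar_mat_wit_pow[OF wit, of r]])
  have Jk: "J ^\<^sub>m k = 1\<^sub>m d"
  proof -
    have "J ^\<^sub>m k = Q * M ^\<^sub>m k * P"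
      by (rule similar_mat_witD(3)[OF refl similar_mat_wit_pow[OF similar_mat_wit_sym[OF wit], of k]])
    also have "\<dots> = Q * P" unfolding Mk using Q by simp
    finally show ?thesis using QP by simp
  qed
  note tri = upper_tri_pow[OF J uJ]
  have diag1: "J $$ (i,i) ^ k = 1" if i: "i < d" for i
  proof -
    have "(J ^\<^sub>m k) $$ (i,i) = J $$ (i,i) ^ k" using tri[of k] i by blast
    moreover have "(J ^\<^sub>m k) $$ (i,i) = 1" unfolding Jk using i by simp
    ultimately show ?thesis by simp
  qed
  have Jk1: "J ^\<^sub>m (k - 1) \<in> carrier_mat d d" using J by simp
  have "mat_trace (M ^\<^sub>m (k - 1)) = mat_trace (J ^\<^sub>m (k - 1))"
    unfolding pw by (rule trace_sim[OF Jk1 P Q QP])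
  also have "\<dots> = (\<Sum>i<d. (J ^\<^sub>m (k - 1)) $$ (i,i))"
    unfolding mat_trace_def using Jk1 dJ by simp
  also have "\<dots> = (\<Sum>i<d. J $$ (i,i) ^ (k - 1))"
  proof (rule sum.cong[OF refl])
    fix i assume "i \<in> {..<d}"
    then show "(J ^\<^sub>m (k - 1)) $$ (i,i) = J $$ (i,i) ^ (k - 1)" using tri[of "k - 1"] by blast
  qed
  also have "\<dots> = (\<Sum>i<d. cnj (J $$ (i,i)))"
  proof (rule sum.cong[OF refl])
    fix i assume "i \<in> {..<d}"
    then show "J $$ (i,i) ^ (k - 1) = cnj (J $$ (i,i))" using diag1 root_unity_cnj[OF _ k] by blast
  qed
  also have "\<dots> = cnj (mat_trace J)" unfolding mat_trace_def using J by simp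
  also have "mat_trace J = mat_trace (P * J * Q)" by (rule trace_sim[OF J P Q QP, symmetric])
  also have "P * J * Q = M" using MJ by simp
  finally show ?thesis .
qed

lemma char_inv:
  assumes G: "is_perm_subgroup n G" and chi: "is_character G \<chi>" and g: "g \<in> G"
  shows "\<chi> (Hilbert_Choice.inv g) = cnj (\<chi> g)"
proof -
  obtain d \<rho> where carr: "\<forall>g\<in>G. \<rho> g \<in> carrier_mat d d" and rid: "\<rho> id = 1\<^sub>m d"
    and hom: "\<forall>g\<in>G. \<forall>h\<in>G. \<rho> (g \<circ> h) = \<rho> g * \<rho> h"
    and ch: "\<forall>g\<in>G. \<chi> g = mat_trace (\<rho> g)"
    using chi unfolding is_character_def by blast
  have Gs: "G \<subseteq> {\<sigma>. \<sigma> permutes {1..n}}" "id \<in> G" "\<forall>g\<in>G. \<forall>h\<in>G. g \<circ> h \<in> G"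
    using G unfolding is_perm_subgroup_def by auto
  have gp: "g permutes {1..n}" using Gs(1) g by blast
  obtain k where gk: "g ^^ k = id" and k: "k > 0"
    using permutation_is_nilpotent[OF permutes_imp_permutation[OF _ gp]] by auto
  have powG: "g ^^ m \<in> G \<and> \<rho> (g ^^ m) = \<rho> g ^\<^sub>m m" for m
  proof (induction m)
    case 0
    have "\<rho> g \<in> carrier_mat d d" using carr g by auto
    then have dr: "dim_row (\<rho> g) = d" by simp
    have e: "g ^^ 0 = id" by simp
    show ?case unfolding e pow_mat.simps(1) dr using Gs(2) rid by blast
  next
    case (Suc m)
    have e: "g ^^ Suc m = g ^^ m \<circ> g" by (rule funpow_Suc_right)
    have mem: "g ^^ m \<circ> g \<in> G" using Suc.IH Gs(3) g by blast
    have "\<rho> (g ^^ m \<circ> g) = \<rho> (g ^^ m) * \<rho> g" using hom Suc.IH g by blast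
    then have "\<rho> (g ^^ m \<circ> g) = \<rho> g ^\<^sub>m Suc m" using Suc.IH by simp
    then show ?case unfolding e using mem by blast
  qed
  from k obtain m where km: "k = Suc m" by (cases k) auto
  have gm: "g \<circ> g ^^ m = id" using gk km by simp
  have "Hilbert_Choice.inv g = Hilbert_Choice.inv g \<circ> (g \<circ> g ^^ m)" using gm by simp
  also have "\<dots> = (Hilbert_Choice.inv g \<circ> g) \<circ> g ^^ m" by (simp add: o_assoc)
  also have "\<dots> = g ^^ m" using permutes_inv_o(2)[OF gp] by simp
  finally have ig: "Hilbert_Choice.inv g = g ^^ (k - 1)" using km by simp
  have "\<rho> g ^\<^sub>m k = 1\<^sub>m d" using powG[of k] gk rid by simp
  then have "mat_trace (\<rho> g ^\<^sub>m (k - 1)) = cnj (mat_trace (\<rho> g))"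
    by (intro trace_pow_pred[OF _ k]) (use carr g in auto)
  then show ?thesis using ig powG[of "k - 1"] ch g by simp
qed



lemma prod_perm_mat:
  assumes th: "\<theta> permutes {1..n}" and ta: "\<tau> permutes {1..n}" and r: "r permutes {1..n}"
  shows "(\<Prod>i\<in>{1..n}. a * perm_mat \<theta> i (Hilbert_Choice.inv r i) + b * perm_mat \<tau> i (Hilbert_Choice.inv r i))
       = (\<Prod>j\<in>{1..n}. (if r j = \<theta> j then a else 0) + (if r j = \<tau> j then b else 0))"
proof -
  have bij: "bij_betw r {1..n} {1..n}" using r by (rule permutes_imp_bij)
  have "(\<Prod>i\<in>{1..n}. a * perm_mat \<theta> i (Hilbert_Choice.inv r i) + b * perm_mat \<tau> i (Hilbert_Choice.inv r i))
      = (\<Prod>j\<in>{1..n}. a * perm_mat \<theta> (r j) (Hilbert_Choice.inv r (r j)) + b * perm_mat \<tau> (r j) (Hilbert_Choice.inv r (r j)))"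
    by (rule prod.reindex_bij_betw[OF bij, symmetric])
  also have "\<dots> = (\<Prod>j\<in>{1..n}. (if r j = \<theta> j then a else 0) + (if r j = \<tau> j then b else 0))"
  proof (rule prod.cong[OF refl])
    fix j assume j: "j \<in> {1..n}"
    have e1: "Hilbert_Choice.inv r (r j) = j" using permutes_inverses(2)[OF r] by simp
    have e2: "(Hilbert_Choice.inv \<theta> (r j) = j) = (\<theta> j = r j)" by (rule permutes_inv_eq[OF th])
    have e3: "(Hilbert_Choice.inv \<tau> (r j) = j) = (\<tau> j = r j)" by (rule permutes_inv_eq[OF ta])
    show "a * perm_mat \<theta> (r j) (Hilbert_Choice.inv r (r j)) + b * perm_mat \<tau> (r j) (Hilbert_Choice.inv r (r j))
        = (if r j = \<theta> j then a else 0) + (if r j = \<tau> j then b else 0)"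
      unfolding e1 perm_mat_def e2 e3 by auto
  qed
  finally show ?thesis .
qed

lemma prod_X:
  fixes a b :: complex
  assumes th: "\<theta> permutes {1..n}" and ta: "\<tau> permutes {1..n}"
    and r: "r \<in> Xset n \<theta> \<tau>"
  shows "(\<Prod>j\<in>{1..n}. (if r j = \<theta> j then a else 0) + (if r j = \<tau> j then b else 0))
     = (a + b) ^ card (Fix n (Hilbert_Choice.inv \<theta> \<circ> \<tau>)) *
       (a ^ (n - (n - card (Fix n (Hilbert_Choice.inv \<theta> \<circ> r))) - card (Fix n (Hilbert_Choice.inv \<theta> \<circ> \<tau>)))
        * b ^ (n - card (Fix n (Hilbert_Choice.inv \<theta> \<circ> r))))"
proof -
  define f where "f j = (if r j = \<theta> j then a else 0) + (if r j = \<tau> j then b else 0)" for j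
  have rX: "\<forall>i\<in>{1..n}. r i = \<theta> i \<or> r i = \<tau> i" using r unfolding Xset_def by auto
  define S1 where "S1 = {j\<in>{1..n}. \<theta> j = \<tau> j}"
  define S2 where "S2 = {j\<in>{1..n}. r j = \<theta> j}"
  have e1: "(Hilbert_Choice.inv \<theta> (\<tau> j) = j) = (\<theta> j = \<tau> j)" for j
    using permutes_inv_eq[OF th] by metis
  have e2: "(Hilbert_Choice.inv \<theta> (r j) = j) = (r j = \<theta> j)" for j
    using permutes_inv_eq[OF th] by metis
  have F1: "Fix n (Hilbert_Choice.inv \<theta> \<circ> \<tau>) = S1"
    unfolding Fix_def S1_def o_def e1 ..
  have F2: "Fix n (Hilbert_Choice.inv \<theta> \<circ> r) = S2"
    unfolding Fix_def S2_def o_def e2 ..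
  have S12: "S1 \<subseteq> S2" unfolding S1_def S2_def using rX by auto
  have S2n: "S2 \<subseteq> {1..n}" unfolding S2_def by auto
  have fin2: "finite S2" using S2n finite_subset by blast
  have c2: "card S2 \<le> n" using card_mono[OF _ S2n] by simp
  have "prod f {1..n} = prod f ({1..n} - S2) * prod f S2"
    by (rule prod.subset_diff[OF S2n]) simp
  also have "prod f S2 = prod f (S2 - S1) * prod f S1"
    by (rule prod.subset_diff[OF S12 fin2])
  also have "prod f ({1..n} - S2) = prod (\<lambda>_. b) ({1..n} - S2)"
    by (rule prod.cong[OF refl]) (use rX in \<open>auto simp: f_def S2_def\<close>)
  also have "prod f (S2 - S1) = prod (\<lambda>_. a) (S2 - S1)"
    by (rule prod.cong[OF refl]) (auto simp: f_def S2_def S1_def)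
  also have "prod f S1 = prod (\<lambda>_. a + b) S1"
  proof (rule prod.cong[OF refl])
    fix j assume "j \<in> S1"
    then have j: "j \<in> {1..n}" "\<theta> j = \<tau> j" by (auto simp: S1_def)
    then have "r j = \<theta> j" using rX by metis
    then show "f j = a + b" using j(2) unfolding f_def by simp
  qed
  finally have "prod f {1..n} = b ^ (n - card S2) * (a ^ (card S2 - card S1) * (a + b) ^ card S1)"
    using card_Diff_subset[OF _ S2n] card_Diff_subset[OF finite_subset[OF S12 fin2] S12] fin2
    by (simp add: prod_constant)
  moreover have "n - (n - card S2) - card S1 = card S2 - card S1" using c2 by simp
  ultimately show ?thesis unfolding F1 F2 f_def[symmetric] by (simp add: mult_ac)
qed

theorem theorem3p2:
  fixes n :: nat and G :: "(nat \<Rightarrow> nat) set" and \<chi> :: "(nat \<Rightarrow> nat) \<Rightarrow> complex"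
    and \<theta> \<tau> :: "nat \<Rightarrow> nat" and a b :: complex
  assumes "is_perm_subgroup n G"
    and "is_character G \<chi>"
    and "\<theta> permutes {1..n}" and "\<tau> permutes {1..n}"
  shows "gen_matrix_fun n G \<chi> (\<lambda>i j. a * perm_mat \<theta> i j + b * perm_mat \<tau> i j)
       = (a + b) ^ card (Fix n (Hilbert_Choice.inv \<theta> \<circ> \<tau>)) *
         (\<Sum>\<sigma>\<in>Xset n \<theta> \<tau> \<inter> G.
            cnj (\<chi> \<sigma>) * a ^ (n - (n - card (Fix n (Hilbert_Choice.inv \<theta> \<circ> \<sigma>))) - card (Fix n (Hilbert_Choice.inv \<theta> \<circ> \<tau>)))
              * b ^ (n - card (Fix n (Hilbert_Choice.inv \<theta> \<circ> \<sigma>))))"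
proof -
  note G = assms(1) and chi = assms(2) and th = assms(3) and ta = assms(4)
  have GP: "G \<subseteq> {\<sigma>. \<sigma> permutes {1..n}}" and Ginv: "\<forall>g\<in>G. Hilbert_Choice.inv g \<in> G"
    using G unfolding is_perm_subgroup_def by auto
  have finG: "finite G"
    using finite_subset[OF GP finite_permutations[of "{1..n}"]] by simp
  define pr where "pr r = (\<Prod>j\<in>{1..n}. (if r j = \<theta> j then a else 0) + (if r j = \<tau> j then b else 0))" for r
  define F where "F = card (Fix n (Hilbert_Choice.inv \<theta> \<circ> \<tau>))"
  define T where "T \<sigma> = a ^ (n - (n - card (Fix n (Hilbert_Choice.inv \<theta> \<circ> \<sigma>))) - F)
              * b ^ (n - card (Fix n (Hilbert_Choice.inv \<theta> \<circ> \<sigma>)))" for \<sigma>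
  have "gen_matrix_fun n G \<chi> (\<lambda>i j. a * perm_mat \<theta> i j + b * perm_mat \<tau> i j)
      = (\<Sum>\<sigma>\<in>G. \<chi> \<sigma> * (\<Prod>i\<in>{1..n}. a * perm_mat \<theta> i (\<sigma> i) + b * perm_mat \<tau> i (\<sigma> i)))"
    unfolding gen_matrix_fun_def ..
  also have "\<dots> = (\<Sum>r\<in>G. \<chi> (Hilbert_Choice.inv r) *
       (\<Prod>i\<in>{1..n}. a * perm_mat \<theta> i (Hilbert_Choice.inv r i) + b * perm_mat \<tau> i (Hilbert_Choice.inv r i)))"
  proof -
    have invinv: "Hilbert_Choice.inv (Hilbert_Choice.inv r) = r" if "r \<in> G" for r
    proof -
      have "r permutes {1..n}" using GP that by blast
      then show ?thesis by (rule permutes_inv_inv)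
    qed
    have invG: "Hilbert_Choice.inv r \<in> G" if "r \<in> G" for r using Ginv that by blast
    show ?thesis
      by (rule sum.reindex_bij_witness[of _ Hilbert_Choice.inv Hilbert_Choice.inv])
         (simp_all add: invinv invG)
  qed
  also have "\<dots> = (\<Sum>r\<in>G. cnj (\<chi> r) * pr r)"
  proof (rule sum.cong[OF refl])
    fix r assume r: "r \<in> G"
    then have rp: "r permutes {1..n}" using GP by blast
    show "\<chi> (Hilbert_Choice.inv r) *
       (\<Prod>i\<in>{1..n}. a * perm_mat \<theta> i (Hilbert_Choice.inv r i) + b * perm_mat \<tau> i (Hilbert_Choice.inv r i))
       = cnj (\<chi> r) * pr r"
      unfolding char_inv[OF G chi r] prod_perm_mat[OF th ta rp] pr_def ..
  qed
  also have "\<dots> = (\<Sum>r\<in>Xset n \<theta> \<tau> \<inter> G. cnj (\<chi> r) * pr r)"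
  proof (rule sum.mono_neutral_right[OF finG])
    show "Xset n \<theta> \<tau> \<inter> G \<subseteq> G" by blast
  next
    show "\<forall>r\<in>G - Xset n \<theta> \<tau> \<inter> G. cnj (\<chi> r) * pr r = 0"
    proof
      fix r assume r: "r \<in> G - Xset n \<theta> \<tau> \<inter> G"
      then have rp: "r permutes {1..n}" using GP by blast
      with r obtain j where j: "j \<in> {1..n}" "r j \<noteq> \<theta> j" "r j \<noteq> \<tau> j"
        unfolding Xset_def by blast
      have "pr r = 0" unfolding pr_def
        by (rule prod_zero) (use j in auto)
      then show "cnj (\<chi> r) * pr r = 0" by simp
    qed
  qed
  also have "\<dots> = (\<Sum>r\<in>Xset n \<theta> \<tau> \<inter> G. cnj (\<chi> r) * ((a + b) ^ F * T r))"
  proof (rule sum.cong[OF refl])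
    fix r assume "r \<in> Xset n \<theta> \<tau> \<inter> G"
    then have rX: "r \<in> Xset n \<theta> \<tau>" by blast
    show "cnj (\<chi> r) * pr r = cnj (\<chi> r) * ((a + b) ^ F * T r)"
      unfolding pr_def T_def F_def prod_X[OF th ta rX] ..
  qed
  also have "\<dots> = (a + b) ^ F * (\<Sum>r\<in>Xset n \<theta> \<tau> \<inter> G. cnj (\<chi> r) * T r)"
    by (simp add: sum_distrib_left mult_ac)
  finally show ?thesis unfolding F_def T_def by (simp add: mult_ac)
qed

end
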